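(* Let $P$ be any poset. Then there exists no strictly isotone map $f:\mathrm{ch}\text{-}\mathrm{Id}(P)\to P$. Consequently, there exists no embedding of posets $f:\mathrm{Id}(P)\to P$.
   Context: For a poset $P$ and a subset $X\subseteq P$, write $P\downarrow X=\{y\in P\mid \exists x\in X,\ y\le x\}$. A downset of $P$ is a subset $d$ with $x\le y\in d\Rightarrow x\in d$. An ideal of $P$ is a (possibly empty) upward directed downset of $P$ (upward directed: every two elements have a common upper bound in the set). $\mathrm{Id}(P)$ denotes the set of all ideals of $P$ (including $\emptyset$), partially ordered by inclusion. $\mathrm{ch}\text{-}\mathrm{Id}(P)$ denotes the subposet of $\mathrm{Id}(P)$ consisting of the ideals of the form $P\downarrow C$ with $C\subseteq P$ a chain (possibly empty). A map $f:P\to Q$ of posets is strictly isotone if $x<y$ in $P$ implies $f(x)<f(y)$ in $Q$. *)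

theory Defs
  imports Main
begin

text \<open>A poset is represented as a carrier set P inside a type of class order,
  with the induced order. Every poset (including the empty one) is of this form.\<close>

definition down_of :: "'a::order set \<Rightarrow> 'a set \<Rightarrow> 'a set" where
  "down_of P X = {y \<in> P. \<exists>x\<in>X. y \<le> x}"

definition is_chain_in :: "'a::order set \<Rightarrow> 'a set \<Rightarrow> bool" where
  "is_chain_in P C \<longleftrightarrow> C \<subseteq> P \<and> (\<forall>x\<in>C. \<forall>y\<in>C. x \<le> y \<or> y \<le> x)"

definition is_ideal :: "'a::order set \<Rightarrow> 'a set \<Rightarrow> bool" where
  "is_ideal P d \<longleftrightarrow> d \<subseteq> P
     \<and> (\<forall>x\<in>P. \<forall>y\<in>d. x \<le> y \<longrightarrow> x \<in> d)
     \<and> (\<forall>x\<in>d. \<forall>y\<in>d. \<exists>z\<in>d. x \<le> z \<and> y \<le> z)"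

definition Id_of :: "'a::order set \<Rightarrow> 'a set set" where
  "Id_of P = {d. is_ideal P d}"

definition chId_of :: "'a::order set \<Rightarrow> 'a set set" where
  "chId_of P = {d \<in> Id_of P. \<exists>C. is_chain_in P C \<and> d = down_of P C}"

definition strictly_isotone_on :: "'a set set \<Rightarrow> 'b::order set \<Rightarrow> ('a set \<Rightarrow> 'b) \<Rightarrow> bool" where
  "strictly_isotone_on A Q f \<longleftrightarrow> (\<forall>d\<in>A. f d \<in> Q) \<and>
     (\<forall>d\<in>A. \<forall>e\<in>A. d \<subset> e \<longrightarrow> f d < f e)"

definition order_embedding_on :: "'a set set \<Rightarrow> 'b::order set \<Rightarrow> ('a set \<Rightarrow> 'b) \<Rightarrow> bool" where
  "order_embedding_on A Q f \<longleftrightarrow> (\<forall>d\<in>A. f d \<in> Q) \<and>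
     (\<forall>d\<in>A. \<forall>e\<in>A. d \<subseteq> e \<longleftrightarrow> f d \<le> f e)"

end

theory Submission
  imports Defs
begin

lemma down_chain_in:
  assumes "is_chain_in P C"
  shows "down_of P C \<in> chId_of P"
proof -
  have "is_ideal P (down_of P C)"
    unfolding is_ideal_def
  proof (intro conjI ballI impI)
    show "down_of P C \<subseteq> P" by (auto simp: down_of_def)
  next
    fix x y assume "x \<in> P" "y \<in> down_of P C" "x \<le> y"
    then show "x \<in> down_of P C" by (auto simp: down_of_def intro: order_trans)
  next
    fix x y assume x: "x \<in> down_of P C" and y: "y \<in> down_of P C"
    then obtain a b where a: "a \<in> C" "x \<le> a" and b: "b \<in> C" "y \<le> b"
      by (auto simp: down_of_def)
    have aP: "a \<in> P" "b \<in> P" using a b assms by (auto simp: is_chain_in_def)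
    have "a \<le> b \<or> b \<le> a" using a b assms by (auto simp: is_chain_in_def)
    then show "\<exists>z\<in>down_of P C. x \<le> z \<and> y \<le> z"
    proof
      assume "a \<le> b" then show ?thesis using a b aP
        by (intro bexI[of _ b]) (auto simp: down_of_def intro: order_trans)
    next
      assume "b \<le> a" then show ?thesis using a b aP
        by (intro bexI[of _ a]) (auto simp: down_of_def intro: order_trans)
    qed
  qed
  then show ?thesis using assms by (auto simp: chId_of_def Id_of_def)
qed

lemma si_le:
  assumes "strictly_isotone_on A Q f" "d \<in> A" "e \<in> A" "d \<subseteq> e"
  shows "f d \<le> f e"
proof (cases "d = e")
  case True then show ?thesis by simp
next
  case False then have "d \<subset> e" using assms(4) by auto
  then show ?thesis using assms(1-3) unfolding strictly_isotone_on_def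
    by (blast intro: less_imp_le)
qed

lemma no_si:
  fixes P :: "'a::order set"
  assumes f: "strictly_isotone_on (chId_of P) P f"
  shows False
proof -
  define A where "A = {C. is_chain_in P C \<and> (\<forall>x\<in>C. x < f (down_of P C))}"
  have "\<exists>M\<in>A. \<forall>X\<in>A. M \<subseteq> X \<longrightarrow> X = M"
  proof (rule Zorn_Lemma, rule ballI)
    fix Ch assume Ch: "Ch \<in> chains A"
    have sub: "Ch \<subseteq> A" and lin: "\<forall>X\<in>Ch. \<forall>Y\<in>Ch. X \<subseteq> Y \<or> Y \<subseteq> X"
      using Ch unfolding chains_def chain_subset_def by auto
    have ch: "is_chain_in P (\<Union>Ch)"
      unfolding is_chain_in_def
    proof (intro conjI ballI)
      show "\<Union>Ch \<subseteq> P" using sub by (auto simp: A_def is_chain_in_def)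
    next
      fix x y assume "x \<in> \<Union>Ch" "y \<in> \<Union>Ch"
      then obtain X Y where "X \<in> Ch" "Y \<in> Ch" "x \<in> X" "y \<in> Y" by auto
      then have "X \<subseteq> Y \<or> Y \<subseteq> X" using lin by blast
      then obtain Z where "Z \<in> Ch" "x \<in> Z" "y \<in> Z"
        using \<open>X \<in> Ch\<close> \<open>Y \<in> Ch\<close> \<open>x \<in> X\<close> \<open>y \<in> Y\<close> by blast
      then have "is_chain_in P Z" "x \<in> Z" "y \<in> Z" using sub by (auto simp: A_def)
      then show "x \<le> y \<or> y \<le> x" unfolding is_chain_in_def by blast
    qed
    have "\<forall>x\<in>\<Union>Ch. x < f (down_of P (\<Union>Ch))"
    proof
      fix x assume "x \<in> \<Union>Ch"
      then obtain X where X: "X \<in> Ch" "x \<in> X" by auto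
      then have XA: "X \<in> A" using sub by auto
      then have "x < f (down_of P X)" using X by (auto simp: A_def)
      moreover have "f (down_of P X) \<le> f (down_of P (\<Union>Ch))"
      proof (rule si_le[OF f])
        show "down_of P X \<in> chId_of P" using XA by (intro down_chain_in) (simp add: A_def)
        show "down_of P (\<Union>Ch) \<in> chId_of P" using ch by (rule down_chain_in)
        show "down_of P X \<subseteq> down_of P (\<Union>Ch)" using X unfolding down_of_def by blast
      qed
      ultimately show "x < f (down_of P (\<Union>Ch))" by (rule less_le_trans)
    qed
    then show "\<Union>Ch \<in> A" using ch by (auto simp: A_def)
  qed
  then obtain M where MA: "M \<in> A" and max: "\<forall>X\<in>A. M \<subseteq> X \<longrightarrow> X = M" by blast
  define a where "a = f (down_of P M)"
  have Mch: "is_chain_in P M" and lt: "\<forall>x\<in>M. x < a" using MA by (auto simp: A_def a_def)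
  have aP: "a \<in> P" using f down_chain_in[OF Mch] by (auto simp: strictly_isotone_on_def a_def)
  have ch2: "is_chain_in P (insert a M)"
    unfolding is_chain_in_def
  proof (intro conjI ballI)
    show "insert a M \<subseteq> P" using Mch aP unfolding is_chain_in_def by blast
  next
    fix x y assume "x \<in> insert a M" "y \<in> insert a M"
    then show "x \<le> y \<or> y \<le> x" using Mch lt unfolding is_chain_in_def
      by (metis insertE less_imp_le order_refl)
  qed
  have anot: "a \<notin> down_of P M"
  proof
    assume "a \<in> down_of P M"
    then obtain c where "c \<in> M" "a \<le> c" by (auto simp: down_of_def)
    with lt show False by (meson leD)
  qed
  have ain: "a \<in> down_of P (insert a M)" using aP by (auto simp: down_of_def)
  have ss: "down_of P M \<subset> down_of P (insert a M)"
  proof -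
    have "down_of P M \<subseteq> down_of P (insert a M)" unfolding down_of_def by blast
    then show ?thesis using anot ain by blast
  qed
  have "a < f (down_of P (insert a M))"
    using f down_chain_in[OF Mch] down_chain_in[OF ch2] ss
    unfolding strictly_isotone_on_def a_def by blast
  then have "insert a M \<in> A"
  proof -
    have "\<forall>x\<in>insert a M. x < f (down_of P (insert a M))"
      using lt \<open>a < f (down_of P (insert a M))\<close> by (metis insertE less_trans)
    then show ?thesis using ch2 unfolding A_def by blast
  qed
  with max have "insert a M = M" by auto
  then have "a \<in> M" by auto
  with lt show False by auto
qed

theorem theorem2p1:
  fixes P :: "'a::order set"
  shows "(\<nexists>f. strictly_isotone_on (chId_of P) P f) \<and> (\<nexists>f. order_embedding_on (Id_of P) P f)"
proof
  show "\<nexists>f. strictly_isotone_on (chId_of P) P f" using no_si by blast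
  show "\<nexists>f. order_embedding_on (Id_of P) P f"
  proof
    assume "\<exists>f. order_embedding_on (Id_of P) P f"
    then obtain f where e: "order_embedding_on (Id_of P) P f" by blast
    have "strictly_isotone_on (chId_of P) P f"
      unfolding strictly_isotone_on_def
    proof (intro conjI ballI impI)
      fix d assume "d \<in> chId_of P" then show "f d \<in> P"
        using e by (auto simp: chId_of_def order_embedding_on_def)
    next
      fix d e' assume d: "d \<in> chId_of P" and e': "e' \<in> chId_of P" and s: "d \<subset> e'"
      have dI: "d \<in> Id_of P" and eI: "e' \<in> Id_of P" using d e' by (auto simp: chId_of_def)
      have "f d \<le> f e'" using e dI eI s by (auto simp: order_embedding_on_def)
      moreover have "\<not> f e' \<le> f d"
      proof
        assume "f e' \<le> f d"
        then have "e' \<subseteq> d" using e dI eI unfolding order_embedding_on_def by blast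
        then show False using s by blast
      qed
      ultimately show "f d < f e'" by (auto simp: less_le)
    qed
    then show False using no_si by blast
  qed
qed

end
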